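(* Let $K$ be a division ring, $G$ a group, and suppose nonzero elements $a,b\in K[G]$ satisfy $ab=0$ and both contain the identity element of $G$ in their supports. Then there is a subgroup $H$ of $G$ such that, letting $c=E^G_H(a)$ and $d=E^G_H(b)$: (i) $cd=0$; (ii) $c\ne0$ and $d\ne0$; (iii) the support of $c$ generates $H$; (iv) the support of $d$ generates $H$.
   Context: $K[G]$ is the group ring; the support of an element is the set of group elements with nonzero coefficient. For a subgroup $H\le G$, $E^G_H:K[G]\to K[H]$ is the $K$-linear map with $E^G_H(g)=g$ for $g\in H$ and $E^G_H(g)=0$ for $g\notin H$. *)

theory Defs
  imports "HOL-Algebra.Generated_Groups"
begin

definition gsupp :: "('g \<Rightarrow> 'k::zero) \<Rightarrow> 'g set" where
  "gsupp a = {x. a x \<noteq> 0}"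

definition group_ring :: "('g, 'm) monoid_scheme \<Rightarrow> ('g \<Rightarrow> 'k::zero) set" where
  "group_ring G = {a. finite (gsupp a) \<and> gsupp a \<subseteq> carrier G}"

definition gr_mult :: "('g, 'm) monoid_scheme \<Rightarrow> ('g \<Rightarrow> 'k::ring) \<Rightarrow> ('g \<Rightarrow> 'k) \<Rightarrow> ('g \<Rightarrow> 'k)" where
  "gr_mult G a b = (\<lambda>z. \<Sum>p\<in>{p \<in> gsupp a \<times> gsupp b. fst p \<otimes>\<^bsub>G\<^esub> snd p = z}.
                         a (fst p) * b (snd p))"

definition proj_sub :: "'g set \<Rightarrow> ('g \<Rightarrow> 'k::zero) \<Rightarrow> ('g \<Rightarrow> 'k)" where
  "proj_sub H a = (\<lambda>g. if g \<in> H then a g else 0)"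

end

theory Submission
  imports Defs
begin

lemma gsupp_proj: "gsupp (proj_sub L c) = gsupp c \<inter> L"
  by (auto simp: gsupp_def proj_sub_def)

lemma proj_proj: "L \<subseteq> H \<Longrightarrow> proj_sub L (proj_sub H x) = proj_sub L x"
  by (auto simp: proj_sub_def fun_eq_iff)

lemma proj_mult:
  fixes c d :: "'g \<Rightarrow> 'k::ring"
  assumes G: "group G" and L: "subgroup L G"
    and sc: "gsupp c \<subseteq> carrier G" and sd: "gsupp d \<subseteq> carrier G"
    and or: "gsupp c \<subseteq> L \<or> gsupp d \<subseteq> L"
  shows "gr_mult G (proj_sub L c) (proj_sub L d) = proj_sub L (gr_mult G c d)"
proof
  interpret group G by (rule G)
  fix z
  show "gr_mult G (proj_sub L c) (proj_sub L d) z = proj_sub L (gr_mult G c d) z"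
  proof (cases "z \<in> L")
    case True
    have eq: "{p \<in> gsupp (proj_sub L c) \<times> gsupp (proj_sub L d). fst p \<otimes>\<^bsub>G\<^esub> snd p = z}
       = {p \<in> gsupp c \<times> gsupp d. fst p \<otimes>\<^bsub>G\<^esub> snd p = z}" (is "?A = ?B")
    proof
      show "?A \<subseteq> ?B" by (auto simp: gsupp_proj)
      show "?B \<subseteq> ?A"
      proof
        fix p assume p: "p \<in> ?B"
        obtain x y where xy: "p = (x,y)" by (cases p)
        have x: "x \<in> gsupp c" and y: "y \<in> gsupp d" and z: "x \<otimes>\<^bsub>G\<^esub> y = z" using p xy by auto
        have xc: "x \<in> carrier G" and yc: "y \<in> carrier G" using x y sc sd by auto
        have "x \<in> L \<and> y \<in> L"
        proof (cases "gsupp c \<subseteq> L")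
          case True
          hence xL: "x \<in> L" using x by auto
          have "y = inv\<^bsub>G\<^esub> x \<otimes>\<^bsub>G\<^esub> z" using z xc yc
            by (auto simp: m_assoc[symmetric] l_inv)
          hence "y \<in> L" using xL \<open>z \<in> L\<close> L
            by (simp add: subgroup.m_closed subgroup.m_inv_closed)
          thus ?thesis using xL by auto
        next
          case False
          hence yL: "y \<in> L" using y or by auto
          have "x = z \<otimes>\<^bsub>G\<^esub> inv\<^bsub>G\<^esub> y" using z xc yc
            by (auto simp: m_assoc r_inv)
          hence "x \<in> L" using yL \<open>z \<in> L\<close> L
            by (simp add: subgroup.m_closed subgroup.m_inv_closed)
          thus ?thesis using yL by auto
        qed
        thus "p \<in> ?A" using x y z xy by (auto simp: gsupp_proj)
      qed
    qed
    have "(\<Sum>p\<in>?A. proj_sub L c (fst p) * proj_sub L d (snd p)) = (\<Sum>p\<in>?A. c (fst p) * d (snd p))"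
      by (rule sum.cong) (auto simp: gsupp_proj, simp add: proj_sub_def)
    then show ?thesis unfolding gr_mult_def using True eq by (simp add: proj_sub_def)
  next
    case False
    have emp: "{p \<in> gsupp (proj_sub L c) \<times> gsupp (proj_sub L d). fst p \<otimes>\<^bsub>G\<^esub> snd p = z} = {}"
      using False L by (auto simp: gsupp_proj subgroup.m_closed)
    have "gr_mult G (proj_sub L c) (proj_sub L d) z = 0" unfolding gr_mult_def emp by simp
    thus ?thesis using False by (simp add: proj_sub_def)
  qed
qed


theorem proposition2p7:
  fixes G :: "('g, 'm) monoid_scheme" and a b :: "'g \<Rightarrow> 'k::division_ring"
  assumes "group G"
    and "a \<in> group_ring G" and "b \<in> group_ring G"
    and "a \<noteq> (\<lambda>_. 0)" and "b \<noteq> (\<lambda>_. 0)"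
    and "gr_mult G a b = (\<lambda>_. 0)"
    and "\<one>\<^bsub>G\<^esub> \<in> gsupp a" and "\<one>\<^bsub>G\<^esub> \<in> gsupp b"
  shows "\<exists>H. subgroup H G \<and>
           (let c = proj_sub H a; d = proj_sub H b in
              gr_mult G c d = (\<lambda>_. 0) \<and>
              c \<noteq> (\<lambda>_. 0) \<and> d \<noteq> (\<lambda>_. 0) \<and>
              generate G (gsupp c) = H \<and>
              generate G (gsupp d) = H)"
proof -
  interpret group G by (rule assms(1))
  have fa: "finite (gsupp a)" and sa: "gsupp a \<subseteq> carrier G"
    and fb: "finite (gsupp b)" and sb: "gsupp b \<subseteq> carrier G"
    using assms(2,3) by (auto simp: group_ring_def)
  define P where "P H \<longleftrightarrow> subgroup H G \<and> gr_mult G (proj_sub H a) (proj_sub H b) = (\<lambda>_. 0)" for H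
  define m where "m H = card (gsupp a \<inter> H) + card (gsupp b \<inter> H)" for H
  have pa: "proj_sub (carrier G) a = a" using sa by (auto simp: proj_sub_def gsupp_def fun_eq_iff)
  have pb: "proj_sub (carrier G) b = b" using sb by (auto simp: proj_sub_def gsupp_def fun_eq_iff)
  have "P (carrier G)" unfolding P_def pa pb using assms(6) subgroup_self by simp
  then obtain H where PH: "P H" and minH: "\<And>H'. P H' \<Longrightarrow> m H \<le> m H'"
    using ex_has_least_nat[of P "carrier G" m] by blast
  have HG: "subgroup H G" using PH by (simp add: P_def)
  have same: "gsupp a \<inter> H' = gsupp a \<inter> H \<and> gsupp b \<inter> H' = gsupp b \<inter> H"
    if "P H'" "H' \<subseteq> H" for H'
  proof -
    have s1: "gsupp a \<inter> H' \<subseteq> gsupp a \<inter> H" and s2: "gsupp b \<inter> H' \<subseteq> gsupp b \<inter> H"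
      using that(2) by auto
    have c1: "card (gsupp a \<inter> H') \<le> card (gsupp a \<inter> H)" using s1 fa by (simp add: card_mono)
    have c2: "card (gsupp b \<inter> H') \<le> card (gsupp b \<inter> H)" using s2 fb by (simp add: card_mono)
    have "m H \<le> m H'" using minH that(1) .
    hence e1: "card (gsupp a \<inter> H') = card (gsupp a \<inter> H)"
      and e2: "card (gsupp b \<inter> H') = card (gsupp b \<inter> H)" using c1 c2 unfolding m_def by linarith+
    have "gsupp a \<inter> H' = gsupp a \<inter> H" by (rule card_subset_eq[OF _ s1 e1]) (simp add: fa)
    moreover have "gsupp b \<inter> H' = gsupp b \<inter> H" by (rule card_subset_eq[OF _ s2 e2]) (simp add: fb)
    ultimately show ?thesis by (rule conjI)
  qed
  have step: "P (generate G (S \<inter> H)) \<and> generate G (S \<inter> H) \<subseteq> H"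
    if "S = gsupp a \<or> S = gsupp b" for S
  proof -
    let ?L = "generate G (S \<inter> H)"
    have SHc: "S \<inter> H \<subseteq> carrier G" using that sa sb by auto
    have LG: "subgroup ?L G" using generate_is_subgroup[OF SHc] .
    have LH: "?L \<subseteq> H" by (rule generate_subgroup_incl[OF _ HG]) blast
    have SL: "S \<inter> H \<subseteq> ?L" by (rule subsetI, rule generate.incl)
    have c1: "gsupp (proj_sub H a) \<subseteq> carrier G" "gsupp (proj_sub H b) \<subseteq> carrier G"
      using sa sb by (auto simp: gsupp_proj)
    have or: "gsupp (proj_sub H a) \<subseteq> ?L \<or> gsupp (proj_sub H b) \<subseteq> ?L"
      using that SL unfolding gsupp_proj by (elim disjE) simp_all
    have "gr_mult G (proj_sub ?L (proj_sub H a)) (proj_sub ?L (proj_sub H b))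
          = proj_sub ?L (gr_mult G (proj_sub H a) (proj_sub H b))"
      using proj_mult[OF assms(1) LG c1 or] .
    also have "\<dots> = (\<lambda>_. 0)" using PH unfolding P_def by (simp add: proj_sub_def)
    finally have "gr_mult G (proj_sub ?L a) (proj_sub ?L b) = (\<lambda>_. 0)"
      by (simp add: proj_proj[OF LH])
    thus ?thesis using LG LH by (simp add: P_def)
  qed
  define H1 where "H1 = generate G (gsupp a \<inter> H)"
  have P1: "P H1" and H1H: "H1 \<subseteq> H" using step[of "gsupp a"] unfolding H1_def by simp_all
  have same1: "gsupp a \<inter> H1 = gsupp a \<inter> H" "gsupp b \<inter> H1 = gsupp b \<inter> H" using same[OF P1 H1H] by blast+
  define H2 where "H2 = generate G (gsupp b \<inter> H)"
  have P2: "P H2" and H2H: "H2 \<subseteq> H" using step[of "gsupp b"] unfolding H2_def by simp_all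
  have same2: "gsupp a \<inter> H2 = gsupp a \<inter> H" "gsupp b \<inter> H2 = gsupp b \<inter> H" using same[OF P2 H2H] by blast+
  have H2G: "subgroup H2 G" and H1G: "subgroup H1 G" using P1 P2 by (auto simp: P_def)
  have "H1 \<subseteq> H2" unfolding H1_def by (rule generate_subgroup_incl[OF _ H2G]) (use same2 in blast)
  moreover have "H2 \<subseteq> H1" unfolding H2_def by (rule generate_subgroup_incl[OF _ H1G]) (use same1 in blast)
  ultimately have H12: "H1 = H2" by auto
  have one: "\<one>\<^bsub>G\<^esub> \<in> H1" using H1G subgroup.one_closed by blast
  have ne1: "proj_sub H1 a \<noteq> (\<lambda>_. 0)"
  proof
    assume "proj_sub H1 a = (\<lambda>_. 0)"
    hence "proj_sub H1 a \<one>\<^bsub>G\<^esub> = 0" by simp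
    thus False using one assms(7) by (simp add: proj_sub_def gsupp_def)
  qed
  have ne2: "proj_sub H1 b \<noteq> (\<lambda>_. 0)"
  proof
    assume "proj_sub H1 b = (\<lambda>_. 0)"
    hence "proj_sub H1 b \<one>\<^bsub>G\<^esub> = 0" by simp
    thus False using one assms(8) by (simp add: proj_sub_def gsupp_def)
  qed
  have g1: "generate G (gsupp (proj_sub H1 a)) = H1" unfolding gsupp_proj same1(1) by (rule H1_def[symmetric])
  have g2: "generate G (gsupp (proj_sub H1 b)) = H1" unfolding gsupp_proj same1(2) using H12 H2_def by simp
  show ?thesis unfolding Let_def using P1 ne1 ne2 g1 g2 unfolding P_def by blast
qed

end
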